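(* Let $q\ge 4$ be a power of $2$. Then there exists a linear AOA$(2,3,q+1,q)$.
   Context: An orthogonal array OA$(t,k,v)$ (with $1\le t\le k$) is a $v^t\times k$ array with entries from a set $X$ of size $v$ such that, for every choice of $t$ of its columns, each $t$-tuple in $X^t$ appears exactly once as a row of the corresponding $v^t\times t$ subarray. For integers $1\le s\le t\le k$, an augmented orthogonal array AOA$(s,t,k,v)$ is a $v^t\times(k+1)$ array $A$ such that: (1) the first $k$ columns of $A$ form an OA$(t,k,v)$ on a symbol set $X$ of size $v$; (2) the last column of $A$ has entries from a set $Y$ of size $v^{t-s}$; (3) for any choice of $s$ of the first $k$ columns, these $s$ columns together with the last column contain every $(s+1)$-tuple of $X^s\times Y$ exactly once as a row. For a prime power $q$, an AOA$(s,t,k,q)$ is linear if $X=\mathbb{F}_q$, $Y=\mathbb{F}_q^{t-s}$, and its set of rows, regarded as vectors in $\mathbb{F}_q^{k}\times\mathbb{F}_q^{t-s}=\mathbb{F}_q^{k+t-s}$, is an $\mathbb{F}_q$-linear subspace. *)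

theory Defs
  imports Main "HOL-Library.FuncSet"
begin

text \<open>An array with k columns over symbol set X is represented by the set of its rows,
  each row a list of length k (column i is entry i). Since every t-subset of columns
  of an OA determines rows uniquely, rows of an OA are distinct, so a set suffices;
  "each t-tuple appears exactly once" is a bijection between rows and tuples.\<close>

definition is_OA :: "nat \<Rightarrow> nat \<Rightarrow> 'x set \<Rightarrow> 'x list set \<Rightarrow> bool" where
  "is_OA t k X R \<longleftrightarrow> 1 \<le> t \<and> t \<le> k \<and> finite R \<and> card R = card X ^ t \<and>
     (\<forall>r\<in>R. length r = k \<and> set r \<subseteq> X) \<and>
     (\<forall>C. C \<subseteq> {..<k} \<and> card C = t \<longrightarrow>
        bij_betw (\<lambda>r. restrict (\<lambda>i. r ! i) C) R (PiE C (\<lambda>_. X)))"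

definition is_AOA :: "nat \<Rightarrow> nat \<Rightarrow> nat \<Rightarrow> 'x set \<Rightarrow> 'y set \<Rightarrow> ('x list \<times> 'y) set \<Rightarrow> bool" where
  "is_AOA s t k X Y A \<longleftrightarrow> 1 \<le> s \<and> s \<le> t \<and> t \<le> k \<and> finite A \<and> card A = card X ^ t \<and>
     inj_on fst A \<and> is_OA t k X (fst ` A) \<and>
     card Y = card X ^ (t - s) \<and> (\<forall>a\<in>A. snd a \<in> Y) \<and>
     (\<forall>C. C \<subseteq> {..<k} \<and> card C = s \<longrightarrow>
        bij_betw (\<lambda>(r, y). (restrict (\<lambda>i. r ! i) C, y)) A (PiE C (\<lambda>_. X) \<times> Y))"

definition is_lin_subspace :: "nat \<Rightarrow> 'a::field list set \<Rightarrow> bool" where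
  "is_lin_subspace n V \<longleftrightarrow> V \<noteq> {} \<and> (\<forall>u\<in>V. length u = n) \<and>
     (\<forall>u\<in>V. \<forall>w\<in>V. map2 (+) u w \<in> V) \<and> (\<forall>u\<in>V. \<forall>c. map ((*) c) u \<in> V)"

text \<open>Linear AOA(s,t,k,q) over the finite field 'a: X = F_q, Y = F_q^(t-s) (lists of
  length t-s), and the rows, viewed as vectors r @ y in F_q^(k+t-s), form a subspace.\<close>

definition is_linear_AOA :: "nat \<Rightarrow> nat \<Rightarrow> nat \<Rightarrow> ('a::{finite,field} list \<times> 'a list) set \<Rightarrow> bool" where
  "is_linear_AOA s t k A \<longleftrightarrow>
     is_AOA s t k (UNIV :: 'a set) {y. length y = t - s} A \<and>
     is_lin_subspace (k + (t - s)) ((\<lambda>(r, y). r @ y) ` A)"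

end

theory Submission
  imports Defs
begin

lemma even_card_inv:
  "finite S \<Longrightarrow> \<forall>x\<in>S. f x \<in> S \<and> f x \<noteq> x \<and> f (f x) = x \<Longrightarrow> even (card S)"
proof (induction "card S" arbitrary: S rule: less_induct)
  case less
  show ?case
  proof (cases "S = {}")
    case True thus ?thesis by simp
  next
    case False
    then obtain x where x: "x \<in> S" by auto
    have fx: "f x \<in> S" "f x \<noteq> x" using less.prems x by auto
    let ?S' = "S - {x, f x}"
    have c: "card ?S' = card S - 2"
      using less.prems(1) x fx by (simp add: card_Diff_subset)
    have cS: "card S \<ge> 2"
    proof -
      have "card {x, f x} \<le> card S" using less.prems(1) x fx by (intro card_mono) auto
      thus ?thesis using fx by simp
    qed
    have cl: "\<forall>y\<in>?S'. f y \<in> ?S' \<and> f y \<noteq> y \<and> f (f y) = y"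
      using less.prems(2) x by (metis Diff_iff insertCI insertE singletonD)
    have "even (card ?S')"
      using less.hyps[of ?S'] cl less.prems(1) c cS by auto
    thus ?thesis using c cS by (metis add_diff_inverse_nat dvd_add_left_iff even_numeral not_le less_irrefl_nat)
  qed
qed

lemma char2:
  assumes "card (UNIV::'a::{finite,field} set) = 2^m" "m \<ge> 1"
  shows "(2::'a) = 0"
proof (rule ccontr)
  assume n: "(2::'a) \<noteq> 0"
  have "\<forall>x\<in>(UNIV - {0::'a}). -x \<in> UNIV - {0} \<and> -x \<noteq> x \<and> -(-x) = x"
  proof
    fix x :: 'a assume "x \<in> UNIV - {0}"
    hence x0: "x \<noteq> 0" by simp
    have "-x \<noteq> x"
    proof
      assume "-x = x"
      hence "2 * x = 0" by (metis add_eq_0_iff mult_2)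
      thus False using n x0 by simp
    qed
    moreover have "-x \<in> UNIV - {0}" using x0 by simp
    ultimately show "-x \<in> UNIV - {0} \<and> -x \<noteq> x \<and> -(-x) = x" by simp
  qed
  hence "even (card (UNIV - {0::'a}))" by (rule even_card_inv[rotated]) simp
  moreover have "card (UNIV - {0::'a}) = 2^m - 1" using assms(1) by (simp add: card_Diff_singleton)
  moreover have "odd ((2::nat)^m - 1)"
  proof -
    obtain k where k: "m = Suc k" using assms(2) by (cases m) auto
    have "(2::nat)^k \<ge> 1" by simp
    thus ?thesis unfolding k by simp
  qed
  ultimately show False by simp
qed


lemma bij_helper:
  fixes h :: "'b::finite \<Rightarrow> 'c" and g :: "'c \<Rightarrow> 'd"
  assumes inj: "\<And>x y. g (h x) = g (h y) \<Longrightarrow> x = y" and into: "\<And>x. g (h x) \<in> T"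
    and fin: "finite T" and card: "card T = card (UNIV::'b set)"
  shows "bij_betw g (range h) T"
proof -
  have i1: "inj (g \<circ> h)" using inj by (auto simp: inj_def)
  have "inj_on g (range h)" using inj by (auto simp: inj_on_def)
  moreover have "g ` range h = T"
  proof -
    have sub: "g ` range h \<subseteq> T" using into by auto
    have "card (g ` range h) = card (UNIV::'b set)" using card_image[OF i1] by (simp add: image_comp)
    then show ?thesis using card_subset_eq[OF fin sub] card by simp
  qed
  ultimately show ?thesis by (simp add: bij_betw_def)
qed

definition vf :: "(nat \<Rightarrow> 'a::field) \<Rightarrow> nat \<Rightarrow> 'a \<Rightarrow> 'a \<Rightarrow> 'a \<Rightarrow> nat \<Rightarrow> 'a" where
  "vf e q a b c i = (if i < q then a + b * e i + c * (e i)^2 else c)"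

definition rowf :: "(nat \<Rightarrow> 'a::field) \<Rightarrow> nat \<Rightarrow> 'a \<Rightarrow> 'a \<Rightarrow> 'a \<Rightarrow> 'a list" where
  "rowf e q a b c = map (vf e q a b c) [0..<q+1]"

lemma rowf_nth: "i < q + 1 \<Longrightarrow> rowf e q a b c ! i = vf e q a b c i"
  unfolding rowf_def by (simp del: upt_Suc)

lemma rowf_len[simp]: "length (rowf e q a b c) = q + 1"
  unfolding rowf_def by simp

lemma vf_diff: "vf e q a b c i - vf e q a' b' c' i = vf e q (a-a') (b-b') (c-c') i"
  unfolding vf_def by (simp add: algebra_simps)

lemma kerA:
  fixes s t u a b c :: "'a::field"
  assumes "s \<noteq> t" "t \<noteq> u" "s \<noteq> u"
    and e1: "a + b*s + c*s^2 = 0" and e2: "a + b*t + c*t^2 = 0" and e3: "a + b*u + c*u^2 = 0"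
  shows "a = 0 \<and> b = 0 \<and> c = 0"
proof -
  have "(s - t) * (b + c*(s+t)) = (a + b*s + c*s^2) - (a + b*t + c*t^2)"
    by (simp add: algebra_simps power2_eq_square)
  hence "(s - t) * (b + c*(s+t)) = 0" using e1 e2 by simp
  hence f1: "b + c*(s+t) = 0" using assms(1) by simp
  have "(s - u) * (b + c*(s+u)) = (a + b*s + c*s^2) - (a + b*u + c*u^2)"
    by (simp add: algebra_simps power2_eq_square)
  hence "(s - u) * (b + c*(s+u)) = 0" using e1 e3 by simp
  hence f2: "b + c*(s+u) = 0" using assms(3) by simp
  have "c * (t - u) = (b + c*(s+t)) - (b + c*(s+u))" by (simp add: algebra_simps)
  hence "c * (t - u) = 0" using f1 f2 by simp
  hence c: "c = 0" using assms(2) by simp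
  hence "b = 0" using f1 by simp
  thus ?thesis using c e1 by simp
qed

lemma kerB:
  fixes s t a b :: "'a::field"
  assumes "s \<noteq> t" and e1: "a + b*s = 0" and e2: "a + b*t = 0"
  shows "a = 0 \<and> b = 0"
proof -
  have "b * (s - t) = (a + b*s) - (a + b*t)" by (simp add: algebra_simps)
  hence "b * (s - t) = 0" using e1 e2 by simp
  hence "b = 0" using assms(1) by simp
  thus ?thesis using e1 by simp
qed


lemma ker3q:
  assumes inj: "inj_on e {..<q}" and "i < q" "j < q" "i \<noteq> j"
    and "vf e q a b c i = 0" "vf e q a b c j = 0" "vf e q a b c q = 0"
  shows "a = 0 \<and> b = 0 \<and> c = 0"
proof -
  have c: "c = 0" using assms(7) by (simp add: vf_def)
  have "e i \<noteq> e j" using inj_on_contraD[OF inj assms(4)] assms(2,3) by simp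
  moreover have "a + b * e i = 0" "a + b * e j = 0" using assms(2,3,5,6) c by (simp_all add: vf_def)
  ultimately show ?thesis using kerB c by blast
qed

lemma ker3:
  assumes inj: "inj_on e {..<q}" and "i < q+1" "j < q+1" "k < q+1" "i \<noteq> j" "j \<noteq> k" "i \<noteq> k"
    and "vf e q a b c i = 0" "vf e q a b c j = 0" "vf e q a b c k = 0"
  shows "a = 0 \<and> b = 0 \<and> c = 0"
proof (cases "i < q \<and> j < q \<and> k < q")
  case True
  have n1: "e i \<noteq> e j" using inj_on_contraD[OF inj assms(5)] True by simp
  have n2: "e j \<noteq> e k" using inj_on_contraD[OF inj assms(6)] True by simp
  have n3: "e i \<noteq> e k" using inj_on_contraD[OF inj assms(7)] True by simp
  have f1: "a + b * e i + c * (e i)^2 = 0" using True assms(8) by (simp add: vf_def)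
  have f2: "a + b * e j + c * (e j)^2 = 0" using True assms(9) by (simp add: vf_def)
  have f3: "a + b * e k + c * (e k)^2 = 0" using True assms(10) by (simp add: vf_def)
  show ?thesis by (rule kerA[OF n1 n2 n3 f1 f2 f3])
next
  case False
  have d: "i = q \<or> j = q \<or> k = q" using False assms(2-4) by auto
  show ?thesis
  proof (cases "i = q")
    case 1: True
    have "j < q" "k < q" using 1 assms(3,4,5,7) by auto
    then show ?thesis using ker3q[OF inj \<open>j<q\<close> \<open>k<q\<close> assms(6) assms(9,10)] assms(8) 1 by simp
  next
    case n1: False
    show ?thesis
    proof (cases "j = q")
      case 2: True
      have "i < q" "k < q" using 2 n1 assms(2,4,6) by auto
      then show ?thesis using ker3q[OF inj \<open>i<q\<close> \<open>k<q\<close> assms(7) assms(8,10)] assms(9) 2 by simp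
    next
      case n2: False
      have 3: "k = q" using d n1 n2 by simp
      have "i < q" "j < q" using n1 n2 assms(2,3) by auto
      then show ?thesis using ker3q[OF inj \<open>i<q\<close> \<open>j<q\<close> assms(5) assms(8,9)] assms(10) 3 by simp
    qed
  qed
qed

lemma kerC:
  assumes inj: "inj_on e {..<q}" and two: "(2::'a::field) = 0"
    and "i < q+1" "j < q+1" "i \<noteq> j"
    and "vf e q a 0 c i = 0" "vf e q (a::'a) 0 c j = 0"
  shows "a = 0 \<and> c = 0"
proof (cases "i < q \<and> j < q")
  case True
  have ne: "e i \<noteq> e j" using inj_on_contraD[OF inj assms(5)] True by simp
  have e1: "a + c * (e i)^2 = 0" and e2: "a + c * (e j)^2 = 0" using True assms(6,7) by (simp_all add: vf_def)
  have "c * (e i - e j)^2 = c * ((e i)^2 - (e j)^2) + c * (e j * (e j - e i)) * 2"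
    by (simp add: algebra_simps power2_eq_square)
  also have "\<dots> = (a + c * (e i)^2) - (a + c * (e j)^2)" using two by (simp add: algebra_simps)
  finally have "c * (e i - e j)^2 = 0" using e1 e2 by simp
  hence c: "c = 0" using ne by simp
  thus ?thesis using e1 by simp
next
  case False
  hence "i = q \<or> j = q" using assms(3,4) by linarith
  moreover have "i < q \<or> j < q" using assms(3-5) by linarith
  ultimately show ?thesis using assms(6,7) by (auto simp: vf_def)
qed

lemma inj3:
  assumes inj: "inj_on e {..<q}" and "i < q+1" "j < q+1" "k < q+1" "i \<noteq> j" "j \<noteq> k" "i \<noteq> k"
    and "vf e q a b c i = vf e q a' b' c' i" "vf e q a b c j = vf e q a' b' c' j"
    "vf e q a b c k = vf e q a' b' c' k"
  shows "a = a' \<and> b = b' \<and> c = c'"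
proof -
  have "vf e q (a-a') (b-b') (c-c') i = 0"
    using trans[OF vf_diff[of e q a b c i a' b' c', symmetric] iffD2[OF right_minus_eq assms(8)]] .
  moreover have "vf e q (a-a') (b-b') (c-c') j = 0"
    using trans[OF vf_diff[of e q a b c j a' b' c', symmetric] iffD2[OF right_minus_eq assms(9)]] .
  moreover have "vf e q (a-a') (b-b') (c-c') k = 0"
    using trans[OF vf_diff[of e q a b c k a' b' c', symmetric] iffD2[OF right_minus_eq assms(10)]] .
  ultimately have "a-a' = 0 \<and> b-b' = 0 \<and> c-c' = 0" by (rule ker3[OF assms(1-7)])
  thus ?thesis by simp
qed

lemma inj2:
  assumes inj: "inj_on e {..<q}" and two: "(2::'a::field) = 0"
    and "i < q+1" "j < q+1" "i \<noteq> j"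
    and "vf e q a b c i = vf e q a' b c' i" "vf e q a b c j = vf e q (a'::'a) b c' j"
  shows "a = a' \<and> c = c'"
proof -
  have "vf e q (a-a') 0 (c-c') i = 0"
    using trans[OF vf_diff[of e q a b c i a' b c', symmetric] iffD2[OF right_minus_eq assms(6)]] by simp
  moreover have "vf e q (a-a') 0 (c-c') j = 0"
    using trans[OF vf_diff[of e q a b c j a' b c', symmetric] iffD2[OF right_minus_eq assms(7)]] by simp
  ultimately have "a-a' = 0 \<and> c-c' = 0" by (rule kerC[OF inj two assms(3-5)])
  thus ?thesis by simp
qed


theorem theorem3p8:
  fixes q :: nat
  assumes "card (UNIV :: 'a set) = q"
    and "\<exists>m. q = 2 ^ m"
    and "q \<ge> 4"
  shows "\<exists>A :: ('a::{finite,field} list \<times> 'a list) set. is_linear_AOA 2 3 (q + 1) A"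
proof -
  obtain m where m: "q = 2^m" using assms(2) by auto
  have m1: "m \<ge> 1" using assms(3) m by (cases m) auto
  have two: "(2::'a) = 0" using char2[OF _ m1] assms(1) m by simp
  obtain e where eb: "bij_betw e {0..<q} (UNIV::'a set)"
    using ex_bij_betw_nat_finite[of "UNIV::'a set"] assms(1) by auto
  have inj: "inj_on e {..<q}" using eb by (simp add: bij_betw_def atLeast0LessThan)
  define hr :: "'a\<times>'a\<times>'a \<Rightarrow> 'a list" where "hr = (\<lambda>(a,b,c). rowf e q a b c)"
  define h :: "'a\<times>'a\<times>'a \<Rightarrow> 'a list \<times> 'a list" where "h = (\<lambda>x. (hr x, [fst (snd x)]))"
  define A where "A = range h"
  have cardT: "card (UNIV::('a\<times>'a\<times>'a) set) = q^3"
    using assms(1) by (simp add: UNIV_Times_UNIV[symmetric] card_cartesian_product power3_eq_cube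
        del: UNIV_Times_UNIV)
  have hr_nth: "\<And>a b c i. i < q+1 \<Longrightarrow> hr (a,b,c) ! i = vf e q a b c i"
    by (simp add: hr_def rowf_nth)
  have key3: "x = y" if "i<q+1" "j<q+1" "k<q+1" "i\<noteq>j" "j\<noteq>k" "i\<noteq>k"
      "hr x ! i = hr y ! i" "hr x ! j = hr y ! j" "hr x ! k = hr y ! k" for x y i j k
  proof -
    obtain a b c where x: "x = (a,b,c)" by (cases x) auto
    obtain a' b' c' where y: "y = (a',b',c')" by (cases y) auto
    show ?thesis using inj3[OF inj that(1-6), of a b c a' b' c'] that(7-9) hr_nth that(1-3)
      unfolding x y by simp
  qed
  have key2: "x = y" if "i<q+1" "j<q+1" "i\<noteq>j" "fst (snd x) = fst (snd y)"
      "hr x ! i = hr y ! i" "hr x ! j = hr y ! j" for x y i j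
  proof -
    obtain a b c where x: "x = (a,b,c)" by (cases x) auto
    obtain a' b' c' where y: "y = (a',b',c')" by (cases y) auto
    have b: "b' = b" using that(4) unfolding x y by simp
    show ?thesis using inj2[OF inj two that(1-3), of a b c a' c'] that(5,6) hr_nth that(1-2)
      unfolding x y b by simp
  qed
  have hr_inj: "inj hr"
    unfolding inj_def using key3[of 0 1 2] assms(3) by auto
  have h_inj: "inj h" using hr_inj unfolding inj_def h_def by auto
  have fstA: "fst ` A = range hr" unfolding A_def h_def by (simp add: image_image)
  have cardA: "card A = q^3" unfolding A_def using card_image[OF h_inj] cardT by simp
  have cardhr: "card (range hr) = q^3" using card_image[OF hr_inj] cardT by simp
  have lenhr: "length (hr x) = q+1" for x by (cases x) (simp add: hr_def)
  have OA: "is_OA 3 (q+1) (UNIV::'a set) (range hr)"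
    unfolding is_OA_def
  proof (intro conjI allI impI ballI)
    show "1 \<le> (3::nat)" by simp
    show "3 \<le> q + 1" using assms(3) by simp
    show "finite (range hr)" by simp
    show "card (range hr) = card (UNIV::'a set) ^ 3" using cardhr assms(1) by simp
    fix r assume "r \<in> range hr"
    then show "length r = q + 1" using lenhr by auto
    show "set r \<subseteq> UNIV" by simp
  next
    fix C assume C: "C \<subseteq> {..<q + 1} \<and> card C = 3"
    then obtain i j k where ijk: "C = {i,j,k}" "i\<noteq>j" "j\<noteq>k" "i\<noteq>k"
      by (auto simp: card_3_iff)
    have lt: "i<q+1" "j<q+1" "k<q+1" using C ijk by auto
    show "bij_betw (\<lambda>r. restrict (\<lambda>i. r ! i) C) (range hr) (PiE C (\<lambda>_. UNIV::'a set))"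
    proof (rule bij_helper)
      fix x y assume eq: "restrict (\<lambda>i. hr x ! i) C = restrict (\<lambda>i. hr y ! i) C"
      have "hr x ! l = hr y ! l" if "l \<in> C" for l using fun_cong[OF eq, of l] that by simp
      then show "x = y" using key3[OF lt ijk(2-4)] ijk(1) by simp
    next
      show "finite (PiE C (\<lambda>_. UNIV::'a set))" using C by (intro finite_PiE) (auto intro: finite_subset)
      show "card (PiE C (\<lambda>_. UNIV::'a set)) = card (UNIV::('a\<times>'a\<times>'a) set)"
        using C cardT assms(1) by (simp add: card_PiE finite_subset[of C "{..<q+1}"])
    qed simp
  qed
  have AOA: "is_AOA 2 3 (q+1) (UNIV::'a set) {y::'a list. length y = 3 - 2} A"
    unfolding is_AOA_def
  proof (intro conjI allI impI ballI)
    show "finite A" unfolding A_def by simp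
    show "card A = card (UNIV::'a set) ^ 3" using cardA assms(1) by simp
    show "inj_on fst A" unfolding A_def h_def using hr_inj by (auto simp: inj_on_def inj_def)
    show "is_OA 3 (q + 1) UNIV (fst ` A)" using OA fstA by simp
    show "card {y::'a list. length y = 3 - 2} = card (UNIV::'a set) ^ (3 - 2)"
      using card_lists_length_eq[of "UNIV::'a set" 1] by simp
    fix a assume "a \<in> A" then show "snd a \<in> {y. length y = 3 - 2}" unfolding A_def h_def by auto
  next
    fix C assume C: "C \<subseteq> {..<q + 1} \<and> card C = 2"
    then obtain i j where ij: "C = {i,j}" "i\<noteq>j"
      by (auto simp: card_2_iff)
    have lt: "i<q+1" "j<q+1" using C ij by auto
    have finY: "finite {y::'a list. length y = 3 - 2}"
      using finite_lists_length_eq[of "UNIV::'a set" 1] by simp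
    have cY: "card {y::'a list. length y = 3 - 2} = q"
      using card_lists_length_eq[of "UNIV::'a set" 1] assms(1) by simp
    show "bij_betw (\<lambda>(r, y). (restrict (\<lambda>i. r ! i) C, y)) A
            (PiE C (\<lambda>_. UNIV::'a set) \<times> {y. length y = 3 - 2})"
      unfolding A_def
    proof (rule bij_helper)
      fix x y assume eq0: "(\<lambda>(r, y). (restrict (\<lambda>i. r ! i) C, y)) (h x) =
                          (\<lambda>(r, y). (restrict (\<lambda>i. r ! i) C, y)) (h y)"
      hence eq: "restrict (\<lambda>i. hr x ! i) C = restrict (\<lambda>i. hr y ! i) C"
        and b: "fst (snd x) = fst (snd y)" by (auto simp: h_def)
      have "hr x ! l = hr y ! l" if "l \<in> C" for l using fun_cong[OF eq, of l] that by simp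
      then show "x = y" using key2[OF lt ij(2) b] ij(1) by simp
    next
      show "finite (PiE C (\<lambda>_. UNIV::'a set) \<times> {y::'a list. length y = 3 - 2})"
        using C finY by (intro finite_cartesian_product finite_PiE) (auto intro: finite_subset)
      show "card (PiE C (\<lambda>_. UNIV::'a set) \<times> {y::'a list. length y = 3 - 2}) =
            card (UNIV::('a\<times>'a\<times>'a) set)"
        using C cardT assms(1) cY
        by (simp add: card_cartesian_product card_PiE finite_subset[of C "{..<q+1}"] power3_eq_cube power2_eq_square)
    qed (auto simp: h_def)
  qed (use assms(3) in auto)
  have V: "(\<lambda>(r, y). r @ y) ` A = (\<lambda>(a,b,c). rowf e q a b c @ [b]) ` UNIV"
  proof -
    have "(\<lambda>(r, y). r @ y) ` A = (\<lambda>x. hr x @ [fst (snd x)]) ` UNIV"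
      by (simp add: A_def h_def image_image)
    moreover have "(\<lambda>x. hr x @ [fst (snd x)]) = (\<lambda>(a,b,c). rowf e q a b c @ [b])"
      by (auto simp: hr_def fun_eq_iff)
    ultimately show ?thesis by metis
  qed
  have lin: "is_lin_subspace (q + 1 + (3 - 2)) ((\<lambda>(r, y). r @ y) ` A)"
    unfolding V is_lin_subspace_def
  proof (intro conjI ballI allI)
    show "(\<lambda>(a,b,c). rowf e q a b c @ [b]) ` UNIV \<noteq> {}" by simp
    fix u assume "u \<in> (\<lambda>(a,b,c). rowf e q a b c @ [b]) ` UNIV"
    then obtain a b c where u: "u = rowf e q a b c @ [b]" by auto
    show "length u = q + 1 + (3 - 2)" using u by simp
    fix d
    have "map ((*) d) u = rowf e q (d*a) (d*b) (d*c) @ [d*b]"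
    proof (rule nth_equalityI)
      show "length (map ((*) d) u) = length (rowf e q (d*a) (d*b) (d*c) @ [d*b])" by (simp add: u)
      fix i assume "i < length (map ((*) d) u)"
      hence i: "i < q+2" by (simp add: u)
      show "map ((*) d) u ! i = (rowf e q (d*a) (d*b) (d*c) @ [d*b]) ! i"
      proof (cases "i < q+1")
        case True thus ?thesis using i by (simp add: u nth_append rowf_nth vf_def algebra_simps)
      next
        case False hence "i = q+1" using i by simp
        thus ?thesis by (simp add: u nth_append)
      qed
    qed
    then show "map ((*) d) u \<in> (\<lambda>(a,b,c). rowf e q a b c @ [b]) ` UNIV"
      by (intro image_eqI[where x="(d*a,d*b,d*c)"]) simp_all
  next
    fix u w assume "u \<in> (\<lambda>(a,b,c). rowf e q a b c @ [b]) ` UNIV"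
      "w \<in> (\<lambda>(a,b,c). rowf e q a b c @ [b]) ` UNIV"
    then obtain a b c a' b' c' where u: "u = rowf e q a b c @ [b]" and w: "w = rowf e q a' b' c' @ [b']"
      by auto
    have "map2 (+) u w = rowf e q (a+a') (b+b') (c+c') @ [b+b']"
    proof (rule nth_equalityI)
      show "length (map2 (+) u w) = length (rowf e q (a+a') (b+b') (c+c') @ [b+b'])" by (simp add: u w)
      fix i assume "i < length (map2 (+) u w)"
      hence i: "i < q+2" by (simp add: u w)
      show "map2 (+) u w ! i = (rowf e q (a+a') (b+b') (c+c') @ [b+b']) ! i"
      proof (cases "i < q+1")
        case True thus ?thesis using i by (simp add: u w nth_append rowf_nth vf_def algebra_simps)
      next
        case False hence "i = q+1" using i by simp
        thus ?thesis by (simp add: u w nth_append)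
      qed
    qed
    then show "map2 (+) u w \<in> (\<lambda>(a,b,c). rowf e q a b c @ [b]) ` UNIV"
      by (intro image_eqI[where x="(a+a',b+b',c+c')"]) simp_all
  qed
  show ?thesis using AOA lin unfolding is_linear_AOA_def by blast
qed

end
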